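(* For every $k\in\mathbb{N}$ and all words $A,B\in\mathsf{W}_\omega$ with $A\sim B$, we have $Ak\sim Bk$.
   Context: Words are finite strings over $\mathbb{N}$; $\mathsf{W}_\omega$ is the set of all words, $\Lambda$ the empty word, $Ak$ the word $A$ followed by the symbol $k$. For $k\in\mathbb{N}$, $\mathsf{S}_k$ is the set of words all of whose symbols are $\ge k$. Given a linear preorder $\precsim$ with $A\sim B$ iff $A\precsim B\wedge B\precsim A$ and $A\prec B$ iff $A\precsim B\wedge\neg B\precsim A$, a finite sequence $(A_1,\dots,A_p)$ is lexicographically not greater than $(B_1,\dots,B_q)$ iff either $p\le q$ and $A_i\sim B_i$ for all $i\le p$, or there is $s<\min(p,q)$ with $A_i\sim B_i$ for $i\le s$ and $A_{s+1}\prec B_{s+1}$. A lexicographically maximal subsequence of a finite sequence is a subsequence that is lexicographically not less than every subsequence. The linear preorder $\precsim$ on $\mathsf{W}_\omega$ is defined by recursion on (largest symbol of $AB$) $-$ (smallest symbol of $AB$): $\Lambda\precsim\Lambda$; if $AB$ is nonempty with minimal symbol $n$, write uniquely $A=A_1n\cdots nA_k$, $B=B_1n\cdots nB_l$ ($k,l\ge1$) with $A_i,B_j\in\mathsf{S}_{n+1}$ (possibly empty); let $C,D$ be lexicographically maximal subsequences of $(A_1,\dots,A_k)$, $(B_1,\dots,B_l)$; then $A\precsim B$ iff $C$ is lexicographically not greater than $D$. *)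

theory Defs
  imports Main
begin

type_synonym word = "nat list"

fun splitn :: "nat \<Rightarrow> word \<Rightarrow> word list" where
  "splitn n [] = [[]]"
| "splitn n (x # xs) =
     (if x = n then [] # splitn n xs
      else (case splitn n xs of [] \<Rightarrow> [[x]] | (y # ys) \<Rightarrow> (x # y) # ys))"

definition req :: "(word \<Rightarrow> word \<Rightarrow> bool) \<Rightarrow> word \<Rightarrow> word \<Rightarrow> bool" where
  "req R A B \<longleftrightarrow> R A B \<and> R B A"

definition rless :: "(word \<Rightarrow> word \<Rightarrow> bool) \<Rightarrow> word \<Rightarrow> word \<Rightarrow> bool" where
  "rless R A B \<longleftrightarrow> R A B \<and> \<not> R B A"

definition lexle :: "(word \<Rightarrow> word \<Rightarrow> bool) \<Rightarrow> word list \<Rightarrow> word list \<Rightarrow> bool" where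
  "lexle R as bs \<longleftrightarrow>
     (length as \<le> length bs \<and> (\<forall>i < length as. req R (as ! i) (bs ! i)))
   \<or> (\<exists>s < min (length as) (length bs).
        (\<forall>i < s. req R (as ! i) (bs ! i)) \<and> rless R (as ! s) (bs ! s))"

definition lexmax :: "(word \<Rightarrow> word \<Rightarrow> bool) \<Rightarrow> word list \<Rightarrow> word list" where
  "lexmax R xs = (SOME C. C \<in> set (subseqs xs) \<and> (\<forall>S \<in> set (subseqs xs). lexle R S C))"

text \<open>One step of the recursive definition: given the preorder R on words of
  smaller spread, compute the preorder on words.\<close>
definition wstep :: "(word \<Rightarrow> word \<Rightarrow> bool) \<Rightarrow> word \<Rightarrow> word \<Rightarrow> bool" where
  "wstep R A B =
     (if A @ B = [] then True
      else (let n = Min (set (A @ B))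
            in lexle R (lexmax R (splitn n A)) (lexmax R (splitn n B))))"

definition spread :: "word \<Rightarrow> nat" where
  "spread W = (if W = [] then 0 else Max (set W) - Min (set W))"

text \<open>The preorder: recursion on spread (A @ B), realised by iterating the step
  spread(A @ B) + 1 times; components of A, B have strictly smaller pairwise spread.\<close>
definition wle :: "word \<Rightarrow> word \<Rightarrow> bool" (infix "\<precsim>w" 50) where
  "A \<precsim>w B \<longleftrightarrow> (wstep ^^ Suc (spread (A @ B))) (\<lambda>_ _. True) A B"

definition wsim :: "word \<Rightarrow> word \<Rightarrow> bool" (infix "\<sim>w" 50) where
  "A \<sim>w B \<longleftrightarrow> A \<precsim>w B \<and> B \<precsim>w A"

end

theory Submission
  imports Defs
begin


lemma lexle_Nil[simp]: "lexle R [] ys"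
  by (simp add: lexle_def)

lemma lexle_Cons_Nil[simp]: "\<not> lexle R (a#as) []"
  by (simp add: lexle_def)

lemma lexle_Cons_Cons[simp]:
  "lexle R (a#as) (b#bs) = (rless R a b \<or> (req R a b \<and> lexle R as bs))"
  unfolding lexle_def
  by (simp only: length_Cons min_Suc_Suc All_less_Suc2 Ex_less_Suc2 nth_Cons_0 nth_Cons_Suc Suc_le_mono) blast

lemma splitn_ne[simp]: "splitn n X \<noteq> []"
  by (induction X) (auto split: list.split)

lemma splitn_notin: "n \<notin> set X \<Longrightarrow> splitn n X = [X]"
  by (induction X) auto

lemma set_splitn: "c \<in> set (splitn n X) \<Longrightarrow> set c \<subseteq> set X - {n}"
proof (induction X arbitrary: c)
  case Nil then show ?case by simp
next
  case (Cons x xs)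
  obtain y ys where yy: "splitn n xs = y # ys" by (cases "splitn n xs") auto
  show ?case
  proof (cases "x = n")
    case True then show ?thesis using Cons by auto
  next
    case False
    then have "splitn n (x#xs) = (x#y)#ys" using yy by simp
    moreover have "set y \<subseteq> set xs - {n}" using Cons.IH yy by simp
    moreover have "\<And>c. c \<in> set ys \<Longrightarrow> set c \<subseteq> set xs - {n}" using Cons.IH yy by simp
    ultimately show ?thesis using Cons.prems False by auto
  qed
qed

lemma length_splitn: "c \<in> set (splitn n X) \<Longrightarrow> length c \<le> length X \<and> (n \<in> set X \<longrightarrow> length c < length X)"
proof (induction X arbitrary: c)
  case Nil then show ?case by simp
next
  case (Cons x xs)
  obtain y ys where yy: "splitn n xs = y # ys" by (cases "splitn n xs") auto
  show ?case
  proof (cases "x = n")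
    case True then show ?thesis using Cons by fastforce
  next
    case False
    then have "splitn n (x#xs) = (x#y)#ys" using yy by simp
    then show ?thesis using Cons yy False by fastforce
  qed
qed

lemma splitn_snoc: "splitn n (X@[k]) = (if k = n then splitn n X @ [[]]
   else butlast (splitn n X) @ [last (splitn n X) @ [k]])"
proof (induction X)
  case Nil then show ?case by simp
next
  case (Cons x xs)
  obtain y ys where yy: "splitn n xs = y # ys" by (cases "splitn n xs") auto
  show ?case using Cons yy by (cases ys) (auto split: list.split)
qed




definition tpo :: "(word \<Rightarrow> word \<Rightarrow> bool) \<Rightarrow> word set \<Rightarrow> bool" where
  "tpo R U \<longleftrightarrow> (\<forall>a\<in>U. R a a) \<and> (\<forall>a\<in>U. \<forall>b\<in>U. R a b \<or> R b a)
     \<and> (\<forall>a\<in>U. \<forall>b\<in>U. \<forall>c\<in>U. R a b \<longrightarrow> R b c \<longrightarrow> R a c)"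

lemma tpo_mono: "tpo R U \<Longrightarrow> V \<subseteq> U \<Longrightarrow> tpo R V"
  unfolding tpo_def by blast

fun sm :: "(word \<Rightarrow> word \<Rightarrow> bool) \<Rightarrow> word list \<Rightarrow> word list" where
  "sm R [] = []"
| "sm R (x#xs) = (if \<forall>y\<in>set xs. R y x then x # sm R xs else sm R xs)"

lemma sm_snoc: "sm R (xs @ [y]) = filter (R y) (sm R xs) @ [y]"
  by (induction xs) auto

lemma set_sm: "set (sm R xs) \<subseteq> set xs"
  by (induction xs) auto

lemma sm_subseqs: "sm R xs \<in> set (subseqs xs)"
  by (induction xs) (auto simp: Let_def)

lemma sm_ne: "xs \<noteq> [] \<Longrightarrow> sm R xs \<noteq> []"
  by (metis append_butlast_last_id sm_snoc snoc_eq_iff_butlast)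

lemma sm_hd: "xs \<noteq> [] \<Longrightarrow> tpo R (set xs) \<Longrightarrow> \<forall>y\<in>set xs. R y (hd (sm R xs))"
proof (induction xs)
  case Nil then show ?case by simp
next
  case (Cons x xs)
  have tpd: "\<And>a. a \<in> set (x#xs) \<Longrightarrow> R a a" "\<And>a b. a \<in> set (x#xs) \<Longrightarrow> b \<in> set (x#xs) \<Longrightarrow> R a b \<or> R b a"
    "\<And>a b c. a \<in> set (x#xs) \<Longrightarrow> b \<in> set (x#xs) \<Longrightarrow> c \<in> set (x#xs) \<Longrightarrow> R a b \<Longrightarrow> R b c \<Longrightarrow> R a c"
    using Cons.prems(2) unfolding tpo_def by blast+
  show ?case
  proof (cases "\<forall>y\<in>set xs. R y x")
    case True then show ?thesis using tpd(1)[of x] by simp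
  next
    case False
    then obtain z where z: "z \<in> set xs" "\<not> R z x" by blast
    then have ne: "xs \<noteq> []" by auto
    have tp: "tpo R (set xs)" using Cons.prems tpo_mono by fastforce
    have h: "\<forall>y\<in>set xs. R y (hd (sm R xs))" using Cons.IH ne tp by blast
    have hin: "hd (sm R xs) \<in> set xs" using set_sm sm_ne[OF ne] hd_in_set by blast
    have "R x z" using z tpd(2)[of x z] by simp
    then have "R x (hd (sm R xs))" using tpd(3)[of x z "hd (sm R xs)"] h z hin by simp
    moreover have "sm R (x#xs) = sm R xs" using False by simp
    ultimately show ?thesis using h by simp
  qed
qed

lemma rless_req: "rless R a b \<Longrightarrow> \<not> req R a b" "req R a b \<Longrightarrow> \<not> rless R a b"
  by (auto simp: rless_def req_def)

lemma lexle_refl: "\<forall>a\<in>set xs. R a a \<Longrightarrow> lexle R xs xs"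
  by (induction xs) (auto simp: req_def)

lemma lexle_append: "\<forall>a\<in>set xs. R a a \<Longrightarrow> lexle R xs (xs @ ys)"
  by (induction xs) (auto simp: req_def)

lemma lexle_total: "tpo R U \<Longrightarrow> set xs \<subseteq> U \<Longrightarrow> set ys \<subseteq> U \<Longrightarrow> lexle R xs ys \<or> lexle R ys xs"
proof (induction xs arbitrary: ys)
  case Nil then show ?case by simp
next
  case (Cons a xs)
  then show ?case
  proof (cases ys)
    case Nil then show ?thesis by simp
  next
    case (Cons b ys')
    have "R a b \<or> R b a" using Cons.prems \<open>ys = b # ys'\<close> unfolding tpo_def by auto
    moreover have "lexle R xs ys' \<or> lexle R ys' xs" using Cons.IH Cons.prems \<open>ys = b # ys'\<close> by auto
    ultimately show ?thesis using \<open>ys = b # ys'\<close> by (auto simp: rless_def req_def)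
  qed
qed

lemma lexle_trans: "tpo R U \<Longrightarrow> set xs \<subseteq> U \<Longrightarrow> set ys \<subseteq> U \<Longrightarrow> set zs \<subseteq> U
  \<Longrightarrow> lexle R xs ys \<Longrightarrow> lexle R ys zs \<Longrightarrow> lexle R xs zs"
proof (induction xs arbitrary: ys zs)
  case Nil then show ?case by simp
next
  case (Cons a xs)
  obtain b ys' where ys: "ys = b # ys'" using Cons.prems by (cases ys) auto
  obtain c zs' where zs: "zs = c # zs'" using Cons.prems ys by (cases zs) auto
  have abc: "a \<in> U" "b \<in> U" "c \<in> U" using Cons.prems ys zs by auto
  have tr: "\<And>x y z. x\<in>U \<Longrightarrow> y\<in>U \<Longrightarrow> z\<in>U \<Longrightarrow> R x y \<Longrightarrow> R y z \<Longrightarrow> R x z"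
    using Cons.prems(1) unfolding tpo_def by blast
  have ih: "lexle R xs ys' \<Longrightarrow> lexle R ys' zs' \<Longrightarrow> lexle R xs zs'"
    using Cons.IH[of ys' zs'] Cons.prems ys zs by auto
  have l1: "rless R a b \<or> (req R a b \<and> lexle R xs ys')" using Cons.prems(5) ys by simp
  have l2: "rless R b c \<or> (req R b c \<and> lexle R ys' zs')" using Cons.prems(6) ys zs by simp
  have "rless R a c \<or> (req R a c \<and> lexle R xs zs')"
    using l1
  proof
    assume ab: "rless R a b"
    from l2 show ?thesis
    proof
      assume "rless R b c" then show ?thesis using ab tr[OF abc] tr[of b c a] abc unfolding rless_def by blast
    next
      assume "req R b c \<and> lexle R ys' zs'" then show ?thesis using ab tr[OF abc] tr[of b c a] abc unfolding rless_def req_def by blast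
    qed
  next
    assume ab: "req R a b \<and> lexle R xs ys'"
    from l2 show ?thesis
    proof
      assume "rless R b c" then show ?thesis using ab tr[OF abc] tr[of c a b] abc unfolding rless_def req_def by blast
    next
      assume "req R b c \<and> lexle R ys' zs'" then show ?thesis using ab ih tr[OF abc] tr[of c b a] abc unfolding req_def by blast
    qed
  qed
  then show ?case using zs by simp
qed

lemma lexle_antisym: "lexle R xs ys \<Longrightarrow> lexle R ys xs \<Longrightarrow> list_all2 (req R) xs ys"
proof (induction xs arbitrary: ys)
  case Nil then show ?case by (cases ys) auto
next
  case (Cons a xs)
  then obtain b ys' where ys: "ys = b # ys'" by (cases ys) auto
  then show ?case using Cons by (auto simp: rless_def req_def)
qed

lemma la2_lexle: "list_all2 (req R) xs ys \<Longrightarrow> lexle R xs ys"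
  by (induction rule: list_all2_induct) auto

lemma req_sym: "req R a b = req R b a"
  by (auto simp: req_def)

lemma la2_req_sym: "list_all2 (req R) xs ys \<Longrightarrow> list_all2 (req R) ys xs"
  by (induction rule: list_all2_induct) (auto simp: req_sym)

lemma lexle_compat:
  assumes t: "tpo R U" and u: "set xs \<subseteq> U" "set ys \<subseteq> U" "set xs' \<subseteq> U" "set ys' \<subseteq> U"
    and e: "list_all2 (req R) xs xs'" "list_all2 (req R) ys ys'"
  shows "lexle R xs ys = lexle R xs' ys'"
proof -
  have a1: "lexle R xs' xs" by (rule la2_lexle[OF la2_req_sym[OF e(1)]])
  have a2: "lexle R ys ys'" by (rule la2_lexle[OF e(2)])
  have a3: "lexle R xs xs'" by (rule la2_lexle[OF e(1)])
  have a4: "lexle R ys' ys" by (rule la2_lexle[OF la2_req_sym[OF e(2)]])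
  show ?thesis
  proof
    assume h: "lexle R xs ys"
    show "lexle R xs' ys'"
      by (rule lexle_trans[OF t u(3) u(2) u(4) lexle_trans[OF t u(3) u(1) u(2) a1 h] a2])
  next
    assume h: "lexle R xs' ys'"
    show "lexle R xs ys"
      by (rule lexle_trans[OF t u(1) u(4) u(2) lexle_trans[OF t u(1) u(3) u(4) a3 h] a4])
  qed
qed

lemma subseqs_set: "S \<in> set (subseqs xs) \<Longrightarrow> set S \<subseteq> set xs"
proof (induction xs arbitrary: S)
  case Nil then show ?case by simp
next
  case (Cons a xs)
  then consider S' where "S = a # S'" "S' \<in> set (subseqs xs)" | "S \<in> set (subseqs xs)"
    by (auto simp: Let_def)
  then show ?case using Cons.IH by cases fastforce+
qed

lemma subseqs_Cons_cases: "S \<in> set (subseqs (x#xs)) \<Longrightarrow> (\<exists>S'. S = x#S' \<and> S' \<in> set (subseqs xs)) \<or> S \<in> set (subseqs xs)"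
  by (auto simp: Let_def)

lemma sm_max: "tpo R (set xs) \<Longrightarrow> S \<in> set (subseqs xs) \<Longrightarrow> lexle R S (sm R xs)"
proof (induction xs arbitrary: S)
  case Nil then show ?case by simp
next
  case (Cons x xs)
  note IH = Cons.IH
  have tp: "tpo R (set xs)" by (rule tpo_mono[OF Cons.prems(1)]) auto
  have tpd: "\<And>a. a \<in> set (x#xs) \<Longrightarrow> R a a" "\<And>a b. a \<in> set (x#xs) \<Longrightarrow> b \<in> set (x#xs) \<Longrightarrow> R a b \<or> R b a"
    "\<And>a b c. a \<in> set (x#xs) \<Longrightarrow> b \<in> set (x#xs) \<Longrightarrow> c \<in> set (x#xs) \<Longrightarrow> R a b \<Longrightarrow> R b c \<Longrightarrow> R a c"
    using Cons.prems(1) unfolding tpo_def by blast+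
  from subseqs_Cons_cases[OF Cons.prems(2)]
  show ?case
  proof
    assume "\<exists>S'. S = x # S' \<and> S' \<in> set (subseqs xs)"
    then obtain S' where a: "S = x # S'" "S' \<in> set (subseqs xs)" by blast
    show ?thesis
    proof (cases "\<forall>y\<in>set xs. R y x")
      case True
      have "lexle R S' (sm R xs)" using IH[OF tp a(2)] .
      moreover have "req R x x" using tpd(1)[of x] by (simp add: req_def)
      ultimately show ?thesis using a True by simp
    next
      case False
      then obtain z where z: "z \<in> set xs" "\<not> R z x" by blast
      then have ne: "xs \<noteq> []" by auto
      have h: "\<forall>y\<in>set xs. R y (hd (sm R xs))" using sm_hd ne tp by blast
      have hin: "hd (sm R xs) \<in> set xs" using set_sm sm_ne[OF ne] hd_in_set by blast
      have "R x z" using z tpd(2)[of x z] by auto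
      have "R x (hd (sm R xs))" using tpd(3)[of x z "hd (sm R xs)"] h z hin \<open>R x z\<close> by simp
      moreover have "\<not> R (hd (sm R xs)) x"
      proof
        assume "R (hd (sm R xs)) x"
        then have "R z x" using tpd(3)[of z "hd (sm R xs)" x] h z hin by simp
        then show False using z by simp
      qed
      ultimately have "rless R x (hd (sm R xs))" unfolding rless_def by simp
      moreover have "sm R (x#xs) = sm R xs" using False by simp
      ultimately show ?thesis using a sm_ne[OF ne]
        by (cases "sm R xs") simp_all
    qed
  next
    assume b: "S \<in> set (subseqs xs)"
    show ?thesis
    proof (cases "\<forall>y\<in>set xs. R y x")
      case False
      then have "sm R (x#xs) = sm R xs" by simp
      then show ?thesis using b IH[OF tp b] by simp
    next
      case True
      show ?thesis
      proof (cases S)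
        case Nil then show ?thesis by simp
      next
        case (Cons s S'')
        note SC = this
        have sin: "s \<in> set xs" using subseqs_set[OF b] SC by simp
        have S'': "S'' \<in> set (subseqs xs)" using Cons_in_subseqsD[of s S'' xs] b SC by simp
        have "R s x" using True sin by simp
        then have "rless R s x \<or> req R s x" unfolding rless_def req_def by simp
        moreover have "lexle R S'' (sm R xs)" using IH[OF tp S''] .
        moreover have "sm R (x#xs) = x # sm R xs" using True by simp
        ultimately show ?thesis using SC by simp
      qed
    qed
  qed
qed

lemma lexmax_sm:
  assumes "tpo R (set xs)"
  shows "lexmax R xs \<in> set (subseqs xs)" "list_all2 (req R) (lexmax R xs) (sm R xs)"
proof -
  have ex: "\<exists>C. C \<in> set (subseqs xs) \<and> (\<forall>S \<in> set (subseqs xs). lexle R S C)"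
    using sm_subseqs[of R xs] sm_max[OF assms] by blast
  have P: "lexmax R xs \<in> set (subseqs xs) \<and> (\<forall>S \<in> set (subseqs xs). lexle R S (lexmax R xs))"
    unfolding lexmax_def using someI_ex[OF ex] .
  then show "lexmax R xs \<in> set (subseqs xs)" by blast
  have "lexle R (sm R xs) (lexmax R xs)" using P sm_subseqs[of R xs] by blast
  moreover have "lexle R (lexmax R xs) (sm R xs)" using P sm_max[OF assms] by blast
  ultimately show "list_all2 (req R) (lexmax R xs) (sm R xs)" by (rule lexle_antisym[rotated])
qed




lemma I_nil: "(wstep ^^ M) (\<lambda>_ _. True) [] [] = True"
  by (cases M) (simp_all add: wstep_def)

lemma wle_nil: "[] \<precsim>w []"
  by (simp add: wle_def wstep_def)

lemma wstep_ne: "X @ Y \<noteq> [] \<Longrightarrow> wstep R X Y = lexle R (lexmax R (splitn (Min (set (X @ Y))) X)) (lexmax R (splitn (Min (set (X @ Y))) Y))"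
  unfolding wstep_def Let_def by (simp only: if_False simp_thms)

lemma lexle_cong: "\<forall>a\<in>set xs \<union> set ys. \<forall>b\<in>set xs \<union> set ys. R a b = R' a b \<Longrightarrow> lexle R xs ys = lexle R' xs ys"
proof (induction xs arbitrary: ys)
  case Nil then show ?case by simp
next
  case (Cons x xs)
  show ?case
  proof (cases ys)
    case Nil then show ?thesis by simp
  next
    case (Cons y ys')
    have "lexle R xs ys' = lexle R' xs ys'" using Cons.IH[of ys'] Cons.prems \<open>ys = y # ys'\<close> by simp
    moreover have "R x y = R' x y" "R y x = R' y x" using Cons.prems \<open>ys = y # ys'\<close> by simp_all
    ultimately show ?thesis using \<open>ys = y # ys'\<close> by (simp add: rless_def req_def)
  qed
qed

lemma lexmax_cong: "\<forall>a\<in>set xs. \<forall>b\<in>set xs. R a b = R' a b \<Longrightarrow> lexmax R xs = lexmax R' xs"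
proof -
  assume h: "\<forall>a\<in>set xs. \<forall>b\<in>set xs. R a b = R' a b"
  have "\<And>C. (C \<in> set (subseqs xs) \<and> (\<forall>S \<in> set (subseqs xs). lexle R S C))
     = (C \<in> set (subseqs xs) \<and> (\<forall>S \<in> set (subseqs xs). lexle R' S C))"
  proof -
    fix C
    show "(C \<in> set (subseqs xs) \<and> (\<forall>S \<in> set (subseqs xs). lexle R S C))
     = (C \<in> set (subseqs xs) \<and> (\<forall>S \<in> set (subseqs xs). lexle R' S C))"
    proof (cases "C \<in> set (subseqs xs)")
      case True
      have "\<And>S. S \<in> set (subseqs xs) \<Longrightarrow> lexle R S C = lexle R' S C"
      proof -
        fix S assume "S \<in> set (subseqs xs)"
        then have "set S \<union> set C \<subseteq> set xs" using subseqs_set True by blast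
        then show "lexle R S C = lexle R' S C" using h by (intro lexle_cong) blast
      qed
      then show ?thesis by auto
    qed simp
  qed
  then show ?thesis unfolding lexmax_def by simp
qed

lemma wstep_cong:
  assumes ne: "X @ Y \<noteq> []" and n: "n = Min (set (X @ Y))"
    and ag: "\<forall>a\<in>set (splitn n X) \<union> set (splitn n Y). \<forall>b\<in>set (splitn n X) \<union> set (splitn n Y). R a b = R' a b"
    and tp: "tpo R' (set (splitn n X) \<union> set (splitn n Y))"
  shows "wstep R X Y = wstep R' X Y"
proof -
  have e1: "lexmax R (splitn n X) = lexmax R' (splitn n X)" using ag by (intro lexmax_cong) blast
  have e2: "lexmax R (splitn n Y) = lexmax R' (splitn n Y)" using ag by (intro lexmax_cong) blast
  have s1: "set (lexmax R' (splitn n X)) \<subseteq> set (splitn n X)"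
    using subseqs_set lexmax_sm(1) tpo_mono[OF tp] by blast
  have s2: "set (lexmax R' (splitn n Y)) \<subseteq> set (splitn n Y)"
    using subseqs_set lexmax_sm(1) tpo_mono[OF tp] by blast
  have "lexle R (lexmax R' (splitn n X)) (lexmax R' (splitn n Y)) = lexle R' (lexmax R' (splitn n X)) (lexmax R' (splitn n Y))"
    using s1 s2 ag by (intro lexle_cong) blast
  then show ?thesis using e1 e2 unfolding wstep_ne[OF ne] n[symmetric] by simp
qed

lemma comp_bound:
  assumes ne: "X @ Y \<noteq> []" and n: "n = Min (set (X @ Y))"
    and a: "a \<in> set (splitn n X) \<union> set (splitn n Y)"
  shows "set a \<subseteq> set (X @ Y) - {n}" "\<forall>x\<in>set a. n < x"
proof -
  show s: "set a \<subseteq> set (X @ Y) - {n}" using a set_splitn by fastforce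
  have "\<forall>x\<in>set (X@Y). n \<le> x" using n by simp
  then show "\<forall>x\<in>set a. n < x" using s by fastforce
qed

lemma comp_spread:
  assumes ne: "X @ Y \<noteq> []" and n: "n = Min (set (X @ Y))"
    and a: "a \<in> set (splitn n X) \<union> set (splitn n Y)"
    and b: "b \<in> set (splitn n X) \<union> set (splitn n Y)"
    and abne: "a @ b \<noteq> []"
  shows "spread (a @ b) < spread (X @ Y)"
proof -
  have sa: "set a \<subseteq> set (X @ Y) - {n}" "\<forall>x\<in>set a. n < x" using comp_bound[OF ne n a] by auto
  have sb: "set b \<subseteq> set (X @ Y) - {n}" "\<forall>x\<in>set b. n < x" using comp_bound[OF ne n b] by auto
  have sub: "set (a @ b) \<subseteq> set (X @ Y)" using sa sb by auto
  have gt: "\<forall>x\<in>set (a@b). n < x" using sa sb by auto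
  have fin: "finite (set (a@b))" "set (a@b) \<noteq> {}" using abne by auto
  have m1: "Max (set (a@b)) \<le> Max (set (X@Y))" using Max_mono[OF sub fin(2)] by simp
  have m2: "n < Min (set (a@b))" using gt fin by simp
  obtain x where x: "x \<in> set (a@b)" using fin(2) by (meson ex_in_conv)
  have m3: "Min (set (a@b)) \<le> Max (set (a@b))" using Min_le[OF fin(1) x] Max_ge[OF fin(1) x] by linarith
  have e1: "spread (a @ b) = Max (set (a@b)) - Min (set (a@b))" using abne unfolding spread_def by (simp only: if_False)
  have e2: "spread (X @ Y) = Max (set (X@Y)) - n" using ne n unfolding spread_def by (simp only: if_False)
  show ?thesis unfolding e1 e2 using m1 m2 m3 by linarith
qed

lemma stab_step:
  assumes ne: "X @ Y \<noteq> []" and n: "n = Min (set (X @ Y))"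
    and st: "\<forall>a\<in>set (splitn n X) \<union> set (splitn n Y). \<forall>b\<in>set (splitn n X) \<union> set (splitn n Y).
        \<forall>M. (spread (a @ b) < M \<or> a @ b = []) \<longrightarrow> (wstep ^^ M) (\<lambda>_ _. True) a b = (a \<precsim>w b)"
    and tp: "tpo wle (set (splitn n X) \<union> set (splitn n Y))"
    and m: "spread (X @ Y) \<le> m"
  shows "(wstep ^^ Suc m) (\<lambda>_ _. True) X Y = wstep wle X Y"
proof -
  have "(wstep ^^ Suc m) (\<lambda>_ _. True) X Y = wstep ((wstep ^^ m) (\<lambda>_ _. True)) X Y" by simp
  also have "\<dots> = wstep wle X Y"
  proof (rule wstep_cong[OF ne n _ tp], intro ballI)
    fix a b assume a: "a \<in> set (splitn n X) \<union> set (splitn n Y)" and b: "b \<in> set (splitn n X) \<union> set (splitn n Y)"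
    have "spread (a @ b) < m \<or> a @ b = []" using comp_spread[OF ne n a b] m by fastforce
    then show "(wstep ^^ m) (\<lambda>_ _. True) a b = (a \<precsim>w b)" using st a b by blast
  qed
  finally show ?thesis .
qed

lemma level:
  assumes ge: "\<forall>x\<in>set (X @ Y). n \<le> x"
    and unf: "n \<in> set (X @ Y) \<Longrightarrow> X \<precsim>w Y = wstep wle X Y"
    and tp: "tpo wle U" and u: "set (splitn n X) \<subseteq> U" "set (splitn n Y) \<subseteq> U"
  shows "(X \<precsim>w Y) = lexle wle (sm wle (splitn n X)) (sm wle (splitn n Y))"
proof (cases "n \<in> set (X @ Y)")
  case True
  then have ne: "X @ Y \<noteq> []" by auto
  have mn: "Min (set (X @ Y)) = n" using True ge by (intro Min_eqI) auto
  have tx: "tpo wle (set (splitn n X))" using tpo_mono[OF tp u(1)] .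
  have ty: "tpo wle (set (splitn n Y))" using tpo_mono[OF tp u(2)] .
  have w: "wstep wle X Y = lexle wle (lexmax wle (splitn n X)) (lexmax wle (splitn n Y))"
    using mn unfolding wstep_ne[OF ne] by simp
  have "lexle wle (lexmax wle (splitn n X)) (lexmax wle (splitn n Y)) = lexle wle (sm wle (splitn n X)) (sm wle (splitn n Y))"
  proof (rule lexle_compat[OF tp])
    show "set (lexmax wle (splitn n X)) \<subseteq> U" using subseqs_set[OF lexmax_sm(1)[OF tx]] u by blast
    show "set (lexmax wle (splitn n Y)) \<subseteq> U" using subseqs_set[OF lexmax_sm(1)[OF ty]] u by blast
    show "set (sm wle (splitn n X)) \<subseteq> U" using set_sm u by blast
    show "set (sm wle (splitn n Y)) \<subseteq> U" using set_sm u by blast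
    show "list_all2 (req wle) (lexmax wle (splitn n X)) (sm wle (splitn n X))" using lexmax_sm(2)[OF tx] .
    show "list_all2 (req wle) (lexmax wle (splitn n Y)) (sm wle (splitn n Y))" using lexmax_sm(2)[OF ty] .
  qed
  then show ?thesis using unf[OF True] w by simp
next
  case False
  then have "splitn n X = [X]" "splitn n Y = [Y]" using splitn_notin by auto
  then show ?thesis by (auto simp add: rless_def req_def)
qed




lemma comp_in:
  assumes "\<forall>x\<in>set P. n \<le> x" "set P \<subseteq> {lo..hi}" "c \<in> set (splitn n P)"
  shows "set c \<subseteq> {Suc n..hi}"
proof
  fix x assume x: "x \<in> set c"
  then have "x \<in> set P" "x \<noteq> n" using set_splitn[OF assms(3)] by auto
  then show "x \<in> {Suc n..hi}" using assms(1,2) by fastforce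
qed

lemma triple:
  assumes ne: "X @ Y @ Z \<noteq> []" and n: "n = Min (set (X @ Y @ Z))"
    and tp: "tpo wle U" and comps: "\<forall>P\<in>{X,Y,Z}. set (splitn n P) \<subseteq> U"
    and unf: "\<forall>P\<in>{X,Y,Z}. \<forall>Q\<in>{X,Y,Z}. P @ Q \<noteq> [] \<longrightarrow> (P \<precsim>w Q) = wstep wle P Q"
  shows "(X \<precsim>w X) \<and> (X \<precsim>w Y \<or> Y \<precsim>w X) \<and> (X \<precsim>w Y \<longrightarrow> Y \<precsim>w Z \<longrightarrow> X \<precsim>w Z)"
proof -
  define f where "f P = sm wle (splitn n P)" for P
  have ge: "\<forall>x\<in>set (X @ Y @ Z). n \<le> x" using n ne by simp
  have fs: "\<forall>P\<in>{X,Y,Z}. set (f P) \<subseteq> U" unfolding f_def using comps set_sm by (meson subset_trans)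
  have lv: "\<And>P Q. P\<in>{X,Y,Z} \<Longrightarrow> Q\<in>{X,Y,Z} \<Longrightarrow> (P \<precsim>w Q) = lexle wle (f P) (f Q)"
  proof -
    fix P Q assume P: "P\<in>{X,Y,Z}" and Q: "Q\<in>{X,Y,Z}"
    show "(P \<precsim>w Q) = lexle wle (f P) (f Q)" unfolding f_def
    proof (rule level[OF _ _ tp])
      show "\<forall>x\<in>set (P @ Q). n \<le> x" using ge P Q by auto
      show "n \<in> set (P @ Q) \<Longrightarrow> (P \<precsim>w Q) = wstep wle P Q"
      proof -
        assume "n \<in> set (P @ Q)"
        then have "P @ Q \<noteq> []" by auto
        then show ?thesis using unf P Q by blast
      qed
      show "set (splitn n P) \<subseteq> U" using comps P by blast
      show "set (splitn n Q) \<subseteq> U" using comps Q by blast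
    qed
  qed
  have tpd: "\<forall>a\<in>U. a \<precsim>w a" using tp unfolding tpo_def by blast
  have fx: "set (f X) \<subseteq> U" and fy: "set (f Y) \<subseteq> U" and fz: "set (f Z) \<subseteq> U" using fs by auto
  have XX: "(X \<precsim>w X) = lexle wle (f X) (f X)" by (rule lv) simp_all
  have XY: "(X \<precsim>w Y) = lexle wle (f X) (f Y)" by (rule lv) simp_all
  have YX: "(Y \<precsim>w X) = lexle wle (f Y) (f X)" by (rule lv) simp_all
  have YZ: "(Y \<precsim>w Z) = lexle wle (f Y) (f Z)" by (rule lv) simp_all
  have XZ: "(X \<precsim>w Z) = lexle wle (f X) (f Z)" by (rule lv) simp_all
  have r: "\<forall>a\<in>set (f X). a \<precsim>w a" using tpd fx by blast
  have 1: "X \<precsim>w X" unfolding XX by (rule lexle_refl[of "f X" wle, OF r])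
  have 2: "X \<precsim>w Y \<or> Y \<precsim>w X" unfolding XY YX by (rule lexle_total[OF tp fx fy])
  have 3: "X \<precsim>w Y \<longrightarrow> Y \<precsim>w Z \<longrightarrow> X \<precsim>w Z"
    unfolding XY YZ XZ using lexle_trans[OF tp fx fy fz] by blast
  show ?thesis using 1 2 3 by blast
qed

lemma global:
  "Suc hi - lo \<le> d \<Longrightarrow>
    (\<forall>X Y M. set X \<subseteq> {lo..hi} \<longrightarrow> set Y \<subseteq> {lo..hi} \<longrightarrow> (spread (X @ Y) < M \<or> X @ Y = [])
        \<longrightarrow> (wstep ^^ M) (\<lambda>_ _. True) X Y = (X \<precsim>w Y))
    \<and> tpo wle {X. set X \<subseteq> {lo..hi}}"
proof (induction d arbitrary: lo hi rule: less_induct)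
  case (less d)
  have IH: "\<And>n. lo \<le> n \<Longrightarrow> n \<le> hi \<Longrightarrow>
    (\<forall>X Y M. set X \<subseteq> {Suc n..hi} \<longrightarrow> set Y \<subseteq> {Suc n..hi} \<longrightarrow> (spread (X @ Y) < M \<or> X @ Y = [])
        \<longrightarrow> (wstep ^^ M) (\<lambda>_ _. True) X Y = (X \<precsim>w Y))
    \<and> tpo wle {X. set X \<subseteq> {Suc n..hi}}"
  proof -
    fix n assume "lo \<le> n" "n \<le> hi"
    then have "Suc hi - Suc n < d" using less.prems by linarith
    then show "?thesis n" using less.IH[of "Suc hi - Suc n" hi "Suc n"] by blast
  qed
  have unf1: "\<And>X Y m. set X \<subseteq> {lo..hi} \<Longrightarrow> set Y \<subseteq> {lo..hi} \<Longrightarrow> X @ Y \<noteq> [] \<Longrightarrow> spread (X @ Y) \<le> m \<Longrightarrow>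
      (wstep ^^ Suc m) (\<lambda>_ _. True) X Y = wstep wle X Y"
  proof -
    fix X Y m assume X: "set X \<subseteq> {lo..hi}" and Y: "set Y \<subseteq> {lo..hi}" and ne: "X @ Y \<noteq> []"
      and m: "spread (X @ Y) \<le> m"
    define n where "n = Min (set (X @ Y))"
    have nin: "n \<in> set (X @ Y)" using ne unfolding n_def by (simp del: set_append)
    then have nb: "lo \<le> n" "n \<le> hi" using X Y by auto
    have ge: "\<forall>x\<in>set (X@Y). n \<le> x" using ne unfolding n_def by simp
    have gX: "\<forall>x\<in>set X. n \<le> x" and gY: "\<forall>x\<in>set Y. n \<le> x" using ge by simp_all
    have cs: "\<And>c. c \<in> set (splitn n X) \<union> set (splitn n Y) \<Longrightarrow> set c \<subseteq> {Suc n..hi}"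
      using comp_in[OF gX X] comp_in[OF gY Y] by blast
    show "(wstep ^^ Suc m) (\<lambda>_ _. True) X Y = wstep wle X Y"
    proof (rule stab_step[OF ne n_def _ _ m])
      show "\<forall>a\<in>set (splitn n X) \<union> set (splitn n Y). \<forall>b\<in>set (splitn n X) \<union> set (splitn n Y).
        \<forall>M. (spread (a @ b) < M \<or> a @ b = []) \<longrightarrow> (wstep ^^ M) (\<lambda>_ _. True) a b = (a \<precsim>w b)"
      proof (intro ballI allI impI)
        fix a b M assume a: "a \<in> set (splitn n X) \<union> set (splitn n Y)" and b: "b \<in> set (splitn n X) \<union> set (splitn n Y)"
          and M: "spread (a @ b) < M \<or> a @ b = []"
        show "(wstep ^^ M) (\<lambda>_ _. True) a b = (a \<precsim>w b)"
          using conjunct1[OF IH[OF nb], rule_format, of a b M] cs[OF a] cs[OF b] M by simp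
      qed
      show "tpo wle (set (splitn n X) \<union> set (splitn n Y))"
        by (rule tpo_mono[OF conjunct2[OF IH[OF nb]]]) (use cs in blast)
    qed
  qed
  have unf: "\<And>X Y. set X \<subseteq> {lo..hi} \<Longrightarrow> set Y \<subseteq> {lo..hi} \<Longrightarrow> X @ Y \<noteq> [] \<Longrightarrow> (X \<precsim>w Y) = wstep wle X Y"
    using unf1 unfolding wle_def by blast
  have part1: "\<forall>X Y M. set X \<subseteq> {lo..hi} \<longrightarrow> set Y \<subseteq> {lo..hi} \<longrightarrow> (spread (X @ Y) < M \<or> X @ Y = [])
        \<longrightarrow> (wstep ^^ M) (\<lambda>_ _. True) X Y = (X \<precsim>w Y)"
  proof (intro allI impI)
    fix X Y M assume X: "set X \<subseteq> {lo..hi}" and Y: "set Y \<subseteq> {lo..hi}" and M: "spread (X @ Y) < M \<or> X @ Y = []"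
    show "(wstep ^^ M) (\<lambda>_ _. True) X Y = (X \<precsim>w Y)"
    proof (cases "X @ Y = []")
      case True then show ?thesis using I_nil wle_nil by simp
    next
      case False
      then obtain m where "M = Suc m" "spread (X @ Y) \<le> m" using M by (cases M) auto
      then show ?thesis using unf1[OF X Y False] unf[OF X Y False] by simp
    qed
  qed
  have part2: "tpo wle {X. set X \<subseteq> {lo..hi}}"
  proof -
    have T: "\<And>X Y Z. set X \<subseteq> {lo..hi} \<Longrightarrow> set Y \<subseteq> {lo..hi} \<Longrightarrow> set Z \<subseteq> {lo..hi} \<Longrightarrow>
      (X \<precsim>w X) \<and> (X \<precsim>w Y \<or> Y \<precsim>w X) \<and> (X \<precsim>w Y \<longrightarrow> Y \<precsim>w Z \<longrightarrow> X \<precsim>w Z)"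
    proof -
      fix X Y Z assume X: "set X \<subseteq> {lo..hi}" and Y: "set Y \<subseteq> {lo..hi}" and Z: "set Z \<subseteq> {lo..hi}"
      show "(X \<precsim>w X) \<and> (X \<precsim>w Y \<or> Y \<precsim>w X) \<and> (X \<precsim>w Y \<longrightarrow> Y \<precsim>w Z \<longrightarrow> X \<precsim>w Z)"
      proof (cases "X @ Y @ Z = []")
        case True then show ?thesis using wle_nil by simp
      next
        case False
        define n where "n = Min (set (X @ Y @ Z))"
        have nin: "n \<in> set (X @ Y @ Z)" using False unfolding n_def by (simp del: set_append)
        then have nb: "lo \<le> n" "n \<le> hi" using X Y Z by auto
        have ge: "\<forall>x\<in>set (X@Y@Z). n \<le> x" using False unfolding n_def by simp
        show ?thesis
        proof (rule triple[OF False n_def conjunct2[OF IH[OF nb]]])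
          have gX: "\<forall>x\<in>set X. n \<le> x" and gY: "\<forall>x\<in>set Y. n \<le> x" and gZ: "\<forall>x\<in>set Z. n \<le> x"
            using ge by simp_all
          show "\<forall>P\<in>{X, Y, Z}. set (splitn n P) \<subseteq> {X. set X \<subseteq> {Suc n..hi}}"
            using comp_in[OF gX X] comp_in[OF gY Y] comp_in[OF gZ Z] by blast
          show "\<forall>P\<in>{X, Y, Z}. \<forall>Q\<in>{X, Y, Z}. P @ Q \<noteq> [] \<longrightarrow> (P \<precsim>w Q) = wstep wle P Q"
          proof (intro ballI impI)
            fix P Q assume "P \<in> {X,Y,Z}" "Q \<in> {X,Y,Z}" "P @ Q \<noteq> []"
            then show "(P \<precsim>w Q) = wstep wle P Q" using unf[of P Q] X Y Z by blast
          qed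
        qed
      qed
    qed
    show ?thesis unfolding tpo_def using T by (metis mem_Collect_eq)
  qed
  show ?case using part1 part2 by blast
qed

lemma wle_tpo: "tpo wle UNIV"
  unfolding tpo_def
proof (intro conjI ballI impI)
  fix a b c :: word
  define hi where "hi = Max (set (a @ b @ c) \<union> {0})"
  have h: "\<And>P. set P \<subseteq> set (a @ b @ c) \<Longrightarrow> set P \<subseteq> {0..hi}"
    unfolding hi_def by (auto intro: Max_ge)
  have "tpo wle {X. set X \<subseteq> {0..hi}}" using global[of hi 0 "Suc hi"] by simp
  then have t: "tpo wle {a, b, c}" by (rule tpo_mono) (use h in auto)
  then show "a \<precsim>w a" unfolding tpo_def by simp
  show "a \<precsim>w b \<or> b \<precsim>w a" using t unfolding tpo_def by simp
  show "a \<precsim>w b \<Longrightarrow> b \<precsim>w c \<Longrightarrow> a \<precsim>w c" using t unfolding tpo_def by blast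
qed

lemma wle_unf: "X @ Y \<noteq> [] \<Longrightarrow> (X \<precsim>w Y) = wstep wle X Y"
proof -
  assume ne: "X @ Y \<noteq> []"
  define hi where "hi = Max (set (X @ Y))"
  have h: "set X \<subseteq> {0..hi}" "set Y \<subseteq> {0..hi}" unfolding hi_def by (auto intro: Max_ge)
  have p1: "\<forall>X Y M. set X \<subseteq> {0..hi} \<longrightarrow> set Y \<subseteq> {0..hi} \<longrightarrow> (spread (X @ Y) < M \<or> X @ Y = [])
        \<longrightarrow> (wstep ^^ M) (\<lambda>_ _. True) X Y = (X \<precsim>w Y)" using global[of hi 0 "Suc hi"] by simp
  define n where "n = Min (set (X @ Y))"
  have ge: "\<forall>x\<in>set (X@Y). n \<le> x" using ne unfolding n_def by simp
  have cs: "\<And>c. c \<in> set (splitn n X) \<union> set (splitn n Y) \<Longrightarrow> set c \<subseteq> {0..hi}"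
    using comp_in[of X n 0 hi] comp_in[of Y n 0 hi] h ge by fastforce
  have "(wstep ^^ Suc (spread (X @ Y))) (\<lambda>_ _. True) X Y = wstep wle X Y"
  proof (rule stab_step[OF ne n_def])
    show "\<forall>a\<in>set (splitn n X) \<union> set (splitn n Y). \<forall>b\<in>set (splitn n X) \<union> set (splitn n Y).
        \<forall>M. (spread (a @ b) < M \<or> a @ b = []) \<longrightarrow> (wstep ^^ M) (\<lambda>_ _. True) a b = (a \<precsim>w b)"
      using p1 cs by blast
    show "tpo wle (set (splitn n X) \<union> set (splitn n Y))" using wle_tpo tpo_mono by blast
  qed simp
  then show ?thesis unfolding wle_def .
qed




lemma wle_refl: "X \<precsim>w X"
  using wle_tpo unfolding tpo_def by blast

lemma wle_total: "X \<precsim>w Y \<or> Y \<precsim>w X"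
  using wle_tpo unfolding tpo_def by blast

lemma wle_trans: "X \<precsim>w Y \<Longrightarrow> Y \<precsim>w Z \<Longrightarrow> X \<precsim>w Z"
  using wle_tpo unfolding tpo_def by blast

lemma req_wle: "req wle = wsim"
  by (intro ext) (simp add: req_def wsim_def)

lemma level_g: "\<forall>x\<in>set (X @ Y). n \<le> x \<Longrightarrow>
   (X \<precsim>w Y) = lexle wle (sm wle (splitn n X)) (sm wle (splitn n Y))"
proof -
  assume g: "\<forall>x\<in>set (X @ Y). n \<le> x"
  have u: "n \<in> set (X @ Y) \<Longrightarrow> (X \<precsim>w Y) = wstep wle X Y"
    by (rule wle_unf) auto
  show ?thesis by (rule level[OF g u wle_tpo]) simp_all
qed

lemma wsim_level:
  assumes "\<forall>x\<in>set (X @ Y). n \<le> x"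
  shows "(X \<sim>w Y) = list_all2 wsim (sm wle (splitn n X)) (sm wle (splitn n Y))"
proof -
  have a: "(X \<precsim>w Y) = lexle wle (sm wle (splitn n X)) (sm wle (splitn n Y))" using level_g assms by blast
  have b: "(Y \<precsim>w X) = lexle wle (sm wle (splitn n Y)) (sm wle (splitn n X))" using level_g assms by auto
  show ?thesis unfolding wsim_def[of X Y] a b
  proof
    assume "lexle wle (sm wle (splitn n X)) (sm wle (splitn n Y)) \<and> lexle wle (sm wle (splitn n Y)) (sm wle (splitn n X))"
    then have "list_all2 (req wle) (sm wle (splitn n X)) (sm wle (splitn n Y))"
      using lexle_antisym by blast
    then show "list_all2 wsim (sm wle (splitn n X)) (sm wle (splitn n Y))" by (simp add: req_wle)
  next
    assume h: "list_all2 wsim (sm wle (splitn n X)) (sm wle (splitn n Y))"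
    then have h': "list_all2 (req wle) (sm wle (splitn n X)) (sm wle (splitn n Y))" by (simp add: req_wle)
    show "lexle wle (sm wle (splitn n X)) (sm wle (splitn n Y)) \<and> lexle wle (sm wle (splitn n Y)) (sm wle (splitn n X))"
      using la2_lexle[OF h'] la2_lexle[OF la2_req_sym[OF h']] by blast
  qed
qed

lemma wle_least: "[] \<precsim>w X"
proof (induction "length X" arbitrary: X rule: less_induct)
  case less
  show ?case
  proof (cases "X = []")
    case True then show ?thesis using wle_refl by simp
  next
    case False
    define n where "n = Min (set X)"
    have nin: "n \<in> set X" using False unfolding n_def by simp
    have ge: "\<forall>x\<in>set ([] @ X). n \<le> x" using False unfolding n_def by simp
    obtain h rest where hr: "sm wle (splitn n X) = h # rest"
      using sm_ne[OF splitn_ne] by (cases "sm wle (splitn n X)") auto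
    have "h \<in> set (sm wle (splitn n X))" using hr by simp
    then have "h \<in> set (splitn n X)" using set_sm by blast
    then have "length h < length X" using length_splitn[of h n X] nin by simp
    then have "[] \<precsim>w h" by (rule less)
    then have "lexle wle [[]] (h # rest)" by (auto simp: rless_def req_def)
    then show ?thesis using level_g[OF ge] hr by simp
  qed
qed

lemma filt_mono:
  assumes "a \<precsim>w a'"
  shows "lexle wle (filter (wle a) S @ [a]) (filter (wle a') S @ [a'])"
proof (induction S)
  case Nil then show ?case using assms by (auto simp: rless_def req_def)
next
  case (Cons c S)
  show ?case
  proof (cases "a' \<precsim>w c")
    case True
    then have "a \<precsim>w c" using assms wle_trans by blast
    then show ?thesis using True Cons wle_refl by (simp add: req_def)
  next
    case False
    note F = this
    show ?thesis
    proof (cases "a \<precsim>w c")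
      case True
      obtain h rest where hr: "filter (wle a') S @ [a'] = h # rest" by (cases "filter (wle a') S @ [a']") auto
      have "h \<in> set (filter (wle a') S @ [a'])" using hr by simp
      then have ah: "a' \<precsim>w h" using wle_refl by auto
      have ca: "c \<precsim>w a'" using F wle_total by blast
      have "rless wle c h" unfolding rless_def
        using ah ca F wle_trans by blast
      then show ?thesis using True F hr by simp
    next
      case False
      then have "\<not> a' \<precsim>w c" using assms wle_trans by blast
      then show ?thesis using False Cons by simp
    qed
  qed
qed

lemma wle_snoc: "X \<precsim>w X @ [k]"
proof (induction "length X" arbitrary: X rule: less_induct)
  case less
  show ?case
  proof (cases "X = []")
    case True then show ?thesis using wle_least by simp
  next
    case False
    define m where "m = Min (set X)"
    have min: "m \<in> set X" "\<forall>x\<in>set X. m \<le> x" using False unfolding m_def by simp_all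
    show ?thesis
    proof (cases "k < m")
      case True
      have ge: "\<forall>x\<in>set (X @ X @ [k]). k \<le> x" using min True by auto
      have kn: "k \<notin> set X" using min True by auto
      have s1: "splitn k X = [X]" using splitn_notin[OF kn] .
      have s2: "splitn k (X @ [k]) = [X] @ [[]]" using splitn_snoc[of k X k] s1 by simp
      have "sm wle ([X] @ [[]]) = [X, []]" unfolding sm_snoc using wle_least by simp
      moreover have "sm wle [X] = [X]" by simp
      moreover have "lexle wle [X] [X, []]" using wle_refl by (simp add: req_def)
      ultimately show ?thesis using level_g[OF ge] s1 s2 by simp
    next
      case False
      have ge: "\<forall>x\<in>set (X @ X @ [k]). m \<le> x" using min False by auto
      show ?thesis
      proof (cases "k = m")
        case True
        have s2: "splitn m (X @ [k]) = splitn m X @ [[]]" using splitn_snoc[of m X k] True by simp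
        have "sm wle (splitn m X @ [[]]) = sm wle (splitn m X) @ [[]]" unfolding sm_snoc
          using wle_least by simp
        moreover have "lexle wle (sm wle (splitn m X)) (sm wle (splitn m X) @ [[]])"
          using lexle_append wle_refl by blast
        ultimately show ?thesis using level_g[OF ge] s2 by simp
      next
        case False
        define xs where "xs = butlast (splitn m X)"
        define a where "a = last (splitn m X)"
        have sX: "splitn m X = xs @ [a]" unfolding xs_def a_def using splitn_ne by simp
        have s2: "splitn m (X @ [k]) = xs @ [a @ [k]]" using splitn_snoc[of m X k] False
          unfolding xs_def a_def by simp
        have "a \<in> set (splitn m X)" using sX by simp
        then have "length a < length X" using length_splitn min by blast
        then have aa: "a \<precsim>w a @ [k]" using less by blast
        show ?thesis using level_g[OF ge] sX s2 filt_mono[OF aa] by (simp add: sm_snoc)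
      qed
    qed
  qed
qed

lemma la2_filter: "list_all2 P xs ys \<Longrightarrow> (\<And>x y. P x y \<Longrightarrow> Q1 x = Q2 y) \<Longrightarrow>
  list_all2 P (filter Q1 xs) (filter Q2 ys)"
  by (induction rule: list_all2_induct) auto

lemma wsim_refl: "X \<sim>w X"
  using wle_refl by (simp add: wsim_def)

theorem lemma3:
  fixes k :: nat and A B :: "nat list"
  assumes "A \<sim>w B"
  shows "(A @ [k]) \<sim>w (B @ [k])"
  using assms
proof (induction "length A + length B" arbitrary: A B rule: less_induct)
  case less
  show ?case
  proof (cases "A @ B = []")
    case True then show ?thesis using wsim_refl by simp
  next
    case False
    define n where "n = Min (set (A @ B))"
    have nin: "n \<in> set (A @ B)" using False unfolding n_def by (simp del: set_append)
    have ge: "\<forall>x\<in>set (A @ B). n \<le> x" using False unfolding n_def by simp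
    have L: "list_all2 wsim (sm wle (splitn n A)) (sm wle (splitn n B))"
      using wsim_level[OF ge] less.prems by blast
    consider "k < n" | "k = n" | "n < k" by linarith
    then show ?thesis
    proof cases
      case 1
      have ge2: "\<forall>x\<in>set ((A @ [k]) @ (B @ [k])). k \<le> x"
      proof
        fix x assume "x \<in> set ((A @ [k]) @ (B @ [k]))"
        then have "x = k \<or> x \<in> set (A @ B)" by auto
        then show "k \<le> x"
        proof
          assume "x \<in> set (A @ B)"
          then have "n \<le> x" using ge by blast
          then show ?thesis using 1 by linarith
        qed simp
      qed
      have "k \<notin> set (A @ B)"
      proof
        assume "k \<in> set (A @ B)"
        then have "n \<le> k" using ge by blast
        then show False using 1 by linarith
      qed
      then have kA: "k \<notin> set A" "k \<notin> set B" by auto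
      have sA: "splitn k (A @ [k]) = [A] @ [[]]" using splitn_snoc[of k A k] splitn_notin[OF kA(1)] by simp
      have sB: "splitn k (B @ [k]) = [B] @ [[]]" using splitn_snoc[of k B k] splitn_notin[OF kA(2)] by simp
      have "list_all2 wsim (sm wle ([A] @ [[]])) (sm wle ([B] @ [[]]))"
        unfolding sm_snoc using wle_least less.prems wsim_refl by simp
      then show ?thesis using wsim_level[OF ge2] sA sB by simp
    next
      case 2
      have ge2: "\<forall>x\<in>set ((A @ [k]) @ (B @ [k])). n \<le> x" using ge 2 by auto
      have sA: "splitn n (A @ [k]) = splitn n A @ [[]]" using splitn_snoc[of n A k] 2 by simp
      have sB: "splitn n (B @ [k]) = splitn n B @ [[]]" using splitn_snoc[of n B k] 2 by simp
      have "list_all2 wsim (sm wle (splitn n A @ [[]])) (sm wle (splitn n B @ [[]]))"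
        unfolding sm_snoc using wle_least L wsim_refl by (simp add: list_all2_appendI)
      then show ?thesis using wsim_level[OF ge2] sA sB by simp
    next
      case 3
      have ge2: "\<forall>x\<in>set ((A @ [k]) @ (B @ [k])). n \<le> x" using ge 3 by auto
      define xs where "xs = butlast (splitn n A)"
      define a where "a = last (splitn n A)"
      define ys where "ys = butlast (splitn n B)"
      define b where "b = last (splitn n B)"
      have sA: "splitn n A = xs @ [a]" unfolding xs_def a_def using splitn_ne by simp
      have sB: "splitn n B = ys @ [b]" unfolding ys_def b_def using splitn_ne by simp
      have sA2: "splitn n (A @ [k]) = xs @ [a @ [k]]" using splitn_snoc[of n A k] 3
        unfolding xs_def a_def by simp
      have sB2: "splitn n (B @ [k]) = ys @ [b @ [k]]" using splitn_snoc[of n B k] 3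
        unfolding ys_def b_def by simp
      define F where "F = filter (wle a) (sm wle xs)"
      define G where "G = filter (wle b) (sm wle ys)"
      have L2: "list_all2 wsim (F @ [a]) (G @ [b])" using L sA sB unfolding F_def G_def by (simp add: sm_snoc)
      then have "length F = length G" using list_all2_lengthD by fastforce
      then have "list_all2 wsim F G \<and> list_all2 wsim [a] [b]" using L2 list_all2_append[of F G wsim "[a]" "[b]"] by simp
      then have FG: "list_all2 wsim F G" and ab: "a \<sim>w b" by simp_all
      have la: "length a \<le> length A \<and> (n \<in> set A \<longrightarrow> length a < length A)"
        using length_splitn[of a n A] sA by simp
      have lb: "length b \<le> length B \<and> (n \<in> set B \<longrightarrow> length b < length B)"
        using length_splitn[of b n B] sB by simp
      have "length a + length b < length A + length B" using la lb nin by auto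
      then have ab2: "(a @ [k]) \<sim>w (b @ [k])" using less.hyps ab by blast
      have ma: "a \<precsim>w a @ [k]" and mb: "b \<precsim>w b @ [k]" using wle_snoc by blast+
      have fa: "filter (wle (a @ [k])) (sm wle xs) = filter (wle (a @ [k])) F"
        unfolding F_def filter_filter using ma wle_trans by (intro filter_cong) blast+
      have fb: "filter (wle (b @ [k])) (sm wle ys) = filter (wle (b @ [k])) G"
        unfolding G_def filter_filter using mb wle_trans by (intro filter_cong) blast+
      have "list_all2 wsim (filter (wle (a @ [k])) F) (filter (wle (b @ [k])) G)"
      proof (rule la2_filter[OF FG])
        fix x y assume "x \<sim>w y"
        then show "(a @ [k] \<precsim>w x) = (b @ [k] \<precsim>w y)" using ab2 wle_trans unfolding wsim_def[of x y] wsim_def[of "a@[k]" "b@[k]"] by blast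
      qed
      then have "list_all2 wsim (sm wle (splitn n (A @ [k]))) (sm wle (splitn n (B @ [k])))"
        unfolding sA2 sB2 sm_snoc fa fb using ab2 by (simp add: list_all2_appendI)
      then show ?thesis using wsim_level[OF ge2] by simp
    qed
  qed
qed


end
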